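(* Let $k\ge2$ and $T\in\mathcal{GT}_k(n)$ with labelling $s$, and suppose $\omega_k(T)\preceq\omega_{k-1}(T)$. Then $s((k-1)1^-)=0$.
   Context: Type $C$ setting: $C_n=\{1<\cdots<n<\overline n<\cdots<\overline1\}$; a column is a strictly increasing word; $N_z(u)$ counts letters $x\le z$ or $x\ge\overline z$; admissible columns are nonempty columns with $N_z(u)\le z$ for all $z$. For admissible columns $c=x_1\cdots x_k$, $d=y_1\cdots y_l$, $c\preceq d$ iff $k\ge l$, $x_i\le y_i$ for $i\le l$, and there are no $1\le a\le b\le n$ and $1\le p\le q<r\le s\le l$ with ($x_p=a,y_q=b,y_r=\overline b,y_s=\overline a$ or $x_p=a,x_q=b,x_r=\overline b,y_s=\overline a$) and $(s-r)+(q-p)\ge b-a$. $\mathrm{ACol}(C_n)$ is the set of admissible columns plus a symbol $\epsilon$, and $\preceq$ is extended by $c\preceq\epsilon$ for all $c$, $\epsilon\not\preceq c$ for $c\ne\epsilon$. Blocks: $\mathfrak{c}(m)=12\cdots m$; $\mathfrak{c}(a,b)=(a+1)\cdots(a+b)$; $\mathfrak{c}(\overline a,c)=\overline a\cdots\overline{a-c+1}$ (empty when $b=0$ resp. $c=0$). $C$-trees: vertices $i$ ($i\ge1$), $im$ (outer), $im^-$ (inner) for $i,m\ge1$; $i$ has level $i$, $im,im^-$ level $i+m$; strand $i$ ordered $i<i1<i1^-<i2<\cdots$. A labelling of rank $k$ is $s$ from vertices of level $\le k$ to $\mathbb N$; valuation $q(v)=s(i)+\sum_{im\le v}s(im)-\sum_{im^-\le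 v}s(im^-)$ for $v$ on strand $i$; $n$-labelling if $0\le q\le n$. $\rho(i)=\mathfrak{c}(s(i))$; $\rho(im)=\mathfrak{c}(q(v'),s(im))$ with $v'$ the predecessor of $im$ on its strand; $\rho(im^-)=\mathfrak{c}(\overline{q(im)},s(im^-))$. Level reading $\omega_t(T)=\rho(t)\rho((t-1)1)\cdots\rho(1(t-1))\rho(1(t-1)^-)\cdots\rho((t-1)1^-)$, or $\epsilon$ if empty. $\mathcal{GT}_k(n)$: $n$-labellings of rank $k$ with each $\omega_t$ ($t\le k$) equal to $\epsilon$ or an admissible column. *)

theory Defs
  imports Main
begin

text \<open>Pos i stands for the letter i, Neg i for the barred letter overline i.
  The order is 1 < ... < n < overline n < ... < overline 1.\<close>

datatype letter = Pos nat | Neg nat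

fun letter_le :: "letter \<Rightarrow> letter \<Rightarrow> bool" where
  "letter_le (Pos i) (Pos j) = (i \<le> j)"
| "letter_le (Pos i) (Neg j) = True"
| "letter_le (Neg i) (Pos j) = False"
| "letter_le (Neg i) (Neg j) = (j \<le> i)"

definition letter_less :: "letter \<Rightarrow> letter \<Rightarrow> bool" where
  "letter_less x y \<longleftrightarrow> letter_le x y \<and> x \<noteq> y"

fun in_Cn :: "nat \<Rightarrow> letter \<Rightarrow> bool" where
  "in_Cn n (Pos i) = (1 \<le> i \<and> i \<le> n)"
| "in_Cn n (Neg i) = (1 \<le> i \<and> i \<le> n)"

definition is_column :: "nat \<Rightarrow> letter list \<Rightarrow> bool" where
  "is_column n u \<longleftrightarrow> (\<forall>x\<in>set u. in_Cn n x) \<and> sorted_wrt letter_less u"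

definition Nz :: "nat \<Rightarrow> letter list \<Rightarrow> nat" where
  "Nz z u = length (filter (\<lambda>x. letter_le x (Pos z) \<or> letter_le (Neg z) x) u)"

definition admissible :: "nat \<Rightarrow> letter list \<Rightarrow> bool" where
  "admissible n u \<longleftrightarrow> u \<noteq> [] \<and> is_column n u \<and> (\<forall>z\<in>{1..n}. Nz z u \<le> z)"

text \<open>The relation c \<preceq> d on admissible columns (positions are 0-based here;
  the conditions only involve differences of positions and their order).\<close>
definition col_preceq :: "nat \<Rightarrow> letter list \<Rightarrow> letter list \<Rightarrow> bool" where
  "col_preceq n c d \<longleftrightarrow>
     length c \<ge> length d \<and>
     (\<forall>i<length d. letter_le (c ! i) (d ! i)) \<and>
     \<not> (\<exists>a b p q r t. 1 \<le> a \<and> a \<le> b \<and> b \<le> n \<and>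
            p \<le> q \<and> q < r \<and> r \<le> t \<and> t < length d \<and>
            ((c ! p = Pos a \<and> d ! q = Pos b \<and> d ! r = Neg b \<and> d ! t = Neg a) \<or>
             (c ! p = Pos a \<and> c ! q = Pos b \<and> c ! r = Neg b \<and> d ! t = Neg a)) \<and>
            (t - r) + (q - p) \<ge> b - a)"

text \<open>ACol(C_n): admissible columns plus the symbol epsilon, modelled as
  letter list option with None = epsilon.\<close>
fun acol_preceq :: "nat \<Rightarrow> letter list option \<Rightarrow> letter list option \<Rightarrow> bool" where
  "acol_preceq n c None = True"
| "acol_preceq n None (Some d) = False"
| "acol_preceq n (Some c) (Some d) = col_preceq n c d"

definition blk :: "nat \<Rightarrow> letter list" where
  "blk m = map Pos [1..<m+1]"

definition blk2 :: "nat \<Rightarrow> nat \<Rightarrow> letter list" where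
  "blk2 a b = map (\<lambda>j. Pos (a + j)) [1..<b+1]"

definition blkbar :: "nat \<Rightarrow> nat \<Rightarrow> letter list" where
  "blkbar a c = map (\<lambda>j. Neg (a - j)) [0..<c]"

text \<open>Root i = vertex i, Outer i m = vertex im, Inner i m = vertex im^-.\<close>
datatype vertex = Root nat | Outer nat nat | Inner nat nat

fun valid_vertex :: "vertex \<Rightarrow> bool" where
  "valid_vertex (Root i) = (1 \<le> i)"
| "valid_vertex (Outer i m) = (1 \<le> i \<and> 1 \<le> m)"
| "valid_vertex (Inner i m) = (1 \<le> i \<and> 1 \<le> m)"

fun level :: "vertex \<Rightarrow> nat" where
  "level (Root i) = i"
| "level (Outer i m) = i + m"
| "level (Inner i m) = i + m"

text \<open>A labelling is a function s : vertex \<Rightarrow> nat; only its values on valid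
  vertices of level \<le> k (the rank) are relevant.
  Valuation q(v) = s(i) + sum_{im \<le> v} s(im) - sum_{im^- \<le> v} s(im^-),
  for the strand order i < i1 < i1^- < i2 < i2^- < ...\<close>
fun val :: "(vertex \<Rightarrow> nat) \<Rightarrow> vertex \<Rightarrow> int" where
  "val s (Root i) = int (s (Root i))"
| "val s (Outer i m) = int (s (Root i)) + (\<Sum>j\<in>{1..m}. int (s (Outer i j)))
                         - (\<Sum>j\<in>{1..<m}. int (s (Inner i j)))"
| "val s (Inner i m) = int (s (Root i)) + (\<Sum>j\<in>{1..m}. int (s (Outer i j)))
                         - (\<Sum>j\<in>{1..m}. int (s (Inner i j)))"

definition n_labelling :: "nat \<Rightarrow> nat \<Rightarrow> (vertex \<Rightarrow> nat) \<Rightarrow> bool" where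
  "n_labelling n k s \<longleftrightarrow>
     (\<forall>v. valid_vertex v \<and> level v \<le> k \<longrightarrow> 0 \<le> val s v \<and> val s v \<le> int n)"

definition pred_outer :: "nat \<Rightarrow> nat \<Rightarrow> vertex" where
  "pred_outer i m = (if m = 1 then Root i else Inner i (m - 1))"

fun rho :: "(vertex \<Rightarrow> nat) \<Rightarrow> vertex \<Rightarrow> letter list" where
  "rho s (Root i) = blk (s (Root i))"
| "rho s (Outer i m) = blk2 (nat (val s (pred_outer i m))) (s (Outer i m))"
| "rho s (Inner i m) = blkbar (nat (val s (Outer i m))) (s (Inner i m))"

definition level_word :: "(vertex \<Rightarrow> nat) \<Rightarrow> nat \<Rightarrow> letter list" where
  "level_word s t =
     rho s (Root t)
     @ concat (map (\<lambda>i. rho s (Outer i (t - i))) (rev [1..<t]))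
     @ concat (map (\<lambda>i. rho s (Inner i (t - i))) [1..<t])"

definition omega :: "(vertex \<Rightarrow> nat) \<Rightarrow> nat \<Rightarrow> letter list option" where
  "omega s t = (if level_word s t = [] then None else Some (level_word s t))"

definition GT :: "nat \<Rightarrow> nat \<Rightarrow> (vertex \<Rightarrow> nat) set" where
  "GT k n = {s. n_labelling n k s \<and>
                (\<forall>t\<in>{1..k}. omega s t = None \<or>
                    (\<exists>w. omega s t = Some w \<and> admissible n w))}"

end

theory Submission
  imports Defs
begin

lemma letter_step: "letter_less (Pos i) x \<Longrightarrow> letter_le x (Pos (Suc i)) \<Longrightarrow> x = Pos (Suc i)"
  by (cases x) (auto simp: letter_less_def)

lemma letter_first: "in_Cn n x \<Longrightarrow> letter_le x (Pos 1) \<Longrightarrow> x = Pos 1"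
  by (cases x) auto

lemma col_prefix:
  assumes col: "is_column n c" and len: "r \<le> length c"
    and le: "\<forall>i<r. letter_le (c!i) (Pos (Suc i))"
  shows "i < r \<Longrightarrow> c!i = Pos (Suc i)"
proof (induction i)
  case 0
  then have "c!0 \<in> set c" using len by (intro nth_mem) auto
  then have "in_Cn n (c!0)" using col by (auto simp: is_column_def)
  then show ?case using le 0 letter_first by auto
next
  case (Suc i)
  then have h: "c!i = Pos (Suc i)" by auto
  have "letter_less (c!i) (c!Suc i)"
    using col Suc.prems len by (auto simp: is_column_def intro: sorted_wrt_nth_less)
  then show ?case using h le Suc.prems letter_step by auto
qed

lemma sorted_less_distinct: "sorted_wrt letter_less c \<Longrightarrow> distinct c"
  by (induction c) (auto simp: letter_less_def)

lemma count_lemma: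
  assumes col: "is_column n c" and S: "S \<subseteq> set c" "\<forall>x\<in>S. P x" "finite S"
  shows "card S \<le> length (filter P c)"
proof -
  have d: "distinct c" using col sorted_less_distinct by (auto simp: is_column_def)
  then have "length (filter P c) = card (set (filter P c))"
    using distinct_card[OF distinct_filter[OF d, of P]] by simp
  moreover have "S \<subseteq> set (filter P c)" using S by auto
  moreover have "card S \<le> card (set (filter P c))" using card_mono[OF _ calculation(2)] by simp
  ultimately show ?thesis by simp
qed

theorem proposition6p2:
  fixes k n :: nat and s :: "vertex \<Rightarrow> nat"
  assumes "k \<ge> 2"
    and "s \<in> GT k n"
    and "acol_preceq n (omega s k) (omega s (k - 1))"
  shows "s (Inner (k - 1) 1) = 0"
proof (rule ccontr)
  assume j0: "s (Inner (k - 1) 1) \<noteq> 0"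
  have vl: "1 \<le> k - 1" "k - 1 + 1 \<le> k" using assms(1) by auto
  define r0 where "r0 = s (Root (k-1))"
  define m where "m = s (Outer (k-1) 1)"
  define j where "j = s (Inner (k-1) 1)"
  define q where "q = r0 + m"
  define c where "c = level_word s k"
  have nl: "n_labelling n k s" and gt: "\<forall>t\<in>{1..k}. omega s t = None \<or>
                    (\<exists>w. omega s t = Some w \<and> admissible n w)"
    using assms(2) by (auto simp: GT_def)
  have vvInner: "0 \<le> val s (Inner (k-1) 1) \<and> val s (Inner (k-1) 1) \<le> int n"
  proof -
    have "valid_vertex (Inner (k-1) 1) \<and> level (Inner (k-1) 1) \<le> k" using vl by simp
    then show ?thesis using nl unfolding n_labelling_def by blast
  qed
  have vvOuter: "0 \<le> val s (Outer (k-1) 1) \<and> val s (Outer (k-1) 1) \<le> int n"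
  proof -
    have "valid_vertex (Outer (k-1) 1) \<and> level (Outer (k-1) 1) \<le> k" using vl by simp
    then show ?thesis using nl unfolding n_labelling_def by blast
  qed
  have vO: "val s (Outer (k-1) 1) = int q" by (simp add: q_def r0_def m_def)
  have vI: "val s (Inner (k-1) 1) = int q - int j" by (simp add: q_def r0_def m_def j_def)
  have "0 \<le> val s (Inner (k-1) 1)" using nl assms(1) unfolding n_labelling_def
    using vvInner by simp
  with vI j0 have qj: "j \<le> q" "1 \<le> q" unfolding j_def by auto
  have "val s (Outer (k-1) 1) \<le> int n" using nl assms(1) unfolding n_labelling_def
    using vvOuter by simp
  with vO have qn: "q \<le> n" by simp
  have mem: "x \<in> set (concat (map f xs))" if "y \<in> set xs" "x \<in> set (f y)" for x f xs and y :: nat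
    using that by auto
  have km: "k - 1 \<in> set (rev [1..<k])" "k - 1 \<in> set [1..<k]" "k - (k - 1) = 1" using assms(1) by auto
  have rhoO: "rho s (Outer (k-1) 1) = blk2 r0 m"
    by (simp add: pred_outer_def r0_def m_def)
  have rhoI: "rho s (Inner (k-1) 1) = blkbar q j"
    using vO by (simp add: j_def)
  have negq: "Neg q \<in> set c"
  proof -
    have "Neg q \<in> set (blkbar q j)" using j0 unfolding blkbar_def j_def by force
    then have h: "Neg q \<in> set (rho s (Inner (k-1) (k-(k-1))))"
      by (subst km(3)) (simp only: rhoI)
    then have "Neg q \<in> set (concat (map (\<lambda>i. rho s (Inner i (k - i))) [1..<k]))"
      using km(2) by (simp only: set_concat set_map) blast
    then show ?thesis unfolding c_def level_word_def by simp
  qed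
  have posr: "Pos i \<in> set c" if "r0 < i" "i \<le> q" for i
  proof -
    have "Pos i \<in> set (blk2 r0 m)" unfolding blk2_def using that q_def
      by (auto intro!: image_eqI[where x="i - r0"])
    then have h: "Pos i \<in> set (rho s (Outer (k-1) (k-(k-1))))"
      by (subst km(3)) (simp only: rhoO)
    then have "Pos i \<in> set (concat (map (\<lambda>i. rho s (Outer i (k - i))) (rev [1..<k])))"
      using km(1) by (simp only: set_concat set_map) blast
    then show ?thesis unfolding c_def level_word_def by simp
  qed
  have cne: "c \<noteq> []" using negq by auto
  have "omega s k = Some c" using cne by (simp add: omega_def c_def)
  moreover have "k \<in> {1..k}" using assms(1) by simp
  ultimately have adm: "admissible n c" using gt by (metis option.inject option.simps(3))
  have col: "is_column n c" using adm by (simp add: admissible_def)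
  have posl: "Pos i \<in> set c" if "1 \<le> i" "i \<le> r0" for i
  proof -
    define d where "d = level_word s (k-1)"
    have lb: "length (blk r0) = r0" by (simp add: blk_def)
    have dpre: "take r0 d = blk r0" unfolding d_def level_word_def
      using lb by (simp add: r0_def)
    have "blk r0 \<noteq> []" using that by (simp add: blk_def)
    then have "d \<noteq> []" using dpre by auto
    then have "omega s (k-1) = Some d" by (simp add: omega_def d_def)
    with assms(3) \<open>omega s k = Some c\<close> have cp: "col_preceq n c d" by simp
    have ld: "r0 \<le> length d" using arg_cong[OF dpre, of length] lb by simp
    have dn: "d ! i' = Pos (Suc i')" if "i' < r0" for i'
    proof -
      have "d ! i' = take r0 d ! i'" using that by simp
      also have "\<dots> = Pos (Suc i')" using dpre that by (simp add: blk_def del: upt_Suc)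
      finally show ?thesis .
    qed
    have cle: "\<forall>i<length d. letter_le (c ! i) (d ! i)" using cp unfolding col_preceq_def by blast
    have "\<forall>i'<r0. letter_le (c!i') (Pos (Suc i'))"
    proof (intro allI impI)
      fix i' assume il: "i' < r0"
      then have "i' < length d" using ld by simp
      then have "letter_le (c!i') (d!i')" using cle by blast
      moreover have "d!i' = Pos (Suc i')" using dn il by blast
      ultimately show "letter_le (c!i') (Pos (Suc i'))" by metis
    qed
    moreover have lc: "r0 \<le> length c" using cp ld by (simp add: col_preceq_def)
    ultimately have "c ! (i-1) = Pos i" using col_prefix[OF col lc, of "i-1"] that by auto
    moreover have "i - 1 < length c" using that lc by simp
    ultimately show ?thesis by (metis nth_mem)
  qed
  define S where "S = insert (Neg q) (Pos ` {1..q})"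
  have Ssub: "S \<subseteq> set c" unfolding S_def using negq posl posr by (auto, metis not_le)
  have SP: "\<forall>x\<in>S. letter_le x (Pos q) \<or> letter_le (Neg q) x" by (auto simp: S_def)
  have ci: "card (Pos ` {1..q}) = q" by (subst card_image) (auto simp: inj_on_def)
  have cS: "card S = q + 1" unfolding S_def using ci by (subst card_insert_disjoint) auto
  have "card S \<le> Nz q c" unfolding Nz_def using count_lemma[OF col Ssub SP] S_def by simp
  moreover have "Nz q c \<le> q" using adm qj qn by (auto simp: admissible_def)
  ultimately show False using cS by simp
qed

end
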